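(* Let $p$ be an odd prime and $\alpha$ an integer with $1\le\alpha<p$. Let $a,b,c$ be non-zero integers with $\gcd(a,b,c)=1$ satisfying $a^p+2^\alpha b^p+c^p=0$ and normalized so that $a\equiv -1 \pmod 4$. Put $A=a^p$, $B=2^\alpha b^p$, and let $E$ be the elliptic curve over $\mathbb{Q}$ given by $y^2=x(x-A)(x+B)$, with conductor $N_E$. Then $N_E$ is a power of $2$ if and only if $(a,b,c)=(-1,1,-1)$.
   Context: Since $\gcd(a,b,c)=1$, $a$ and $c$ are odd, so the normalization $a\equiv-1\pmod 4$ can always be achieved by replacing $(a,b,c)$ by $(-a,-b,-c)$. $N_E$ denotes the (arithmetic) conductor of the elliptic curve $E$ over $\mathbb{Q}$. *)

theory Defs
  imports Complex_Main "HOL-Computational_Algebra.Primes"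
begin

text \<open>Elliptic curves over Q in general Weierstrass form
  y^2 + a1 x y + a3 y = x^3 + a2 x^2 + a4 x + a6,
  represented by the coefficient tuple (a1, a2, a3, a4, a6).\<close>

type_synonym weier = "rat \<times> rat \<times> rat \<times> rat \<times> rat"

definition disc :: "weier \<Rightarrow> rat" where
  "disc E = (case E of (a1, a2, a3, a4, a6) \<Rightarrow>
     let b2 = a1^2 + 4*a2; b4 = 2*a4 + a1*a3; b6 = a3^2 + 4*a6;
         b8 = a1^2*a6 + 4*a2*a6 - a1*a3*a4 + a2*a3^2 - a4^2
     in - (b2^2*b8) - 8*b4^3 - 27*b6^2 + 9*b2*b4*b6)"

text \<open>Admissible change of variables x = u^2 x' + r, y = u^3 y' + s u^2 x' + t
  (Silverman, Table 3.1): coefficients of the transformed model.\<close>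

definition change_vars :: "rat \<Rightarrow> rat \<Rightarrow> rat \<Rightarrow> rat \<Rightarrow> weier \<Rightarrow> weier" where
  "change_vars u r s t E = (case E of (a1, a2, a3, a4, a6) \<Rightarrow>
     ((a1 + 2*s) / u,
      (a2 - s*a1 + 3*r - s^2) / u^2,
      (a3 + r*a1 + 2*t) / u^3,
      (a4 - s*a3 + 2*r*a2 - (t + r*s)*a1 + 3*r^2 - 2*s*t) / u^4,
      (a6 + r*a4 + r^2*a2 + r^3 - t*a3 - t^2 - r*t*a1) / u^6))"

definition int_at :: "int \<Rightarrow> rat \<Rightarrow> bool" where
  "int_at l q \<longleftrightarrow> (\<exists>m n. n \<noteq> 0 \<and> \<not> l dvd n \<and> q = of_int m / of_int n)"

definition unit_at :: "int \<Rightarrow> rat \<Rightarrow> bool" where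
  "unit_at l q \<longleftrightarrow> q \<noteq> 0 \<and> int_at l q \<and> int_at l (1 / q)"

definition integral_model_at :: "int \<Rightarrow> weier \<Rightarrow> bool" where
  "integral_model_at l E = (case E of (a1, a2, a3, a4, a6) \<Rightarrow>
     int_at l a1 \<and> int_at l a2 \<and> int_at l a3 \<and> int_at l a4 \<and> int_at l a6)"

definition good_reduction :: "weier \<Rightarrow> int \<Rightarrow> bool" where
  "good_reduction E l \<longleftrightarrow>
     (\<exists>u r s t. u \<noteq> 0 \<and> integral_model_at l (change_vars u r s t E)
                \<and> unit_at l (disc (change_vars u r s t E)))"

text \<open>The primes dividing the conductor N_E are exactly the primes of bad reduction;
  hence N_E is a power of 2 iff E has good reduction at every odd prime.\<close>
definition conductor_primes :: "weier \<Rightarrow> int set" where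
  "conductor_primes E = {l. prime l \<and> l > 0 \<and> \<not> good_reduction E l}"

definition conductor_is_power_of_2 :: "weier \<Rightarrow> bool" where
  "conductor_is_power_of_2 E \<longleftrightarrow> conductor_primes E \<subseteq> {2}"

text \<open>The Frey-type curve y^2 = x (x - A) (x + B) = x^3 + (B - A) x^2 - A B x.\<close>
definition frey_curve :: "rat \<Rightarrow> rat \<Rightarrow> weier" where
  "frey_curve A B = (0, B - A, 0, - A * B, 0)"

end

theory Submission
  imports Defs
begin


definition c4 :: "weier \<Rightarrow> rat" where
  "c4 E = (case E of (a1, a2, a3, a4, a6) \<Rightarrow> (a1^2 + 4*a2)^2 - 24*(2*a4 + a1*a3))"

lemma disc_cv1: "disc (change_vars 1 r s t (a1,a2,a3,a4,a6)) = disc (a1,a2,a3,a4,a6)"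
  unfolding disc_def change_vars_def by (simp add: Let_def) algebra

lemma c4_cv1: "c4 (change_vars 1 r s t (a1,a2,a3,a4,a6)) = c4 (a1,a2,a3,a4,a6)"
  unfolding c4_def change_vars_def by (simp add: Let_def) algebra

lemma cv_split: "change_vars u r s t E = (case change_vars 1 r s t E of (x1,x2,x3,x4,x6) \<Rightarrow>
   (x1/u, x2/u^2, x3/u^3, x4/u^4, x6/u^6))"
  by (cases E) (simp add: change_vars_def)

lemma disc_scale0: "disc (u*y1, u^2*y2, u^3*y3, u^4*y4, u^6*y6) = u^12 * disc (y1,y2,y3,y4,y6)"
  unfolding disc_def by (simp add: Let_def) algebra

lemma disc_scale: "u \<noteq> 0 \<Longrightarrow> disc (x1/u, x2/u^2, x3/u^3, x4/u^4, x6/u^6) = disc (x1,x2,x3,x4,x6) / u^12"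
  using disc_scale0[of u "x1/u" "x2/u^2" "x3/u^3" "x4/u^4" "x6/u^6"] by (simp add: field_simps)

lemma c4_scale0: "c4 (u*y1, u^2*y2, u^3*y3, u^4*y4, u^6*y6) = u^4 * c4 (y1,y2,y3,y4,y6)"
  unfolding c4_def by (simp add: Let_def) algebra

lemma c4_scale: "u \<noteq> 0 \<Longrightarrow> c4 (x1/u, x2/u^2, x3/u^3, x4/u^4, x6/u^6) = c4 (x1,x2,x3,x4,x6) / u^4"
  using c4_scale0[of u "x1/u" "x2/u^2" "x3/u^3" "x4/u^4" "x6/u^6"] by (simp add: field_simps)

lemma disc_cv: "u \<noteq> 0 \<Longrightarrow> disc (change_vars u r s t E) = disc E / u^12"
proof -
  assume u: "u \<noteq> 0"
  obtain a1 a2 a3 a4 a6 where E: "E = (a1,a2,a3,a4,a6)" by (cases E) auto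
  obtain x1 x2 x3 x4 x6 where X: "change_vars 1 r s t E = (x1,x2,x3,x4,x6)"
    by (cases "change_vars 1 r s t E") auto
  have "disc (change_vars u r s t E) = disc (x1,x2,x3,x4,x6) / u^12"
    using cv_split[of u r s t E] X disc_scale[OF u] by simp
  also have "disc (x1,x2,x3,x4,x6) = disc E" using X disc_cv1 E by metis
  finally show ?thesis .
qed

lemma c4_cv: "u \<noteq> 0 \<Longrightarrow> c4 (change_vars u r s t E) = c4 E / u^4"
proof -
  assume u: "u \<noteq> 0"
  obtain a1 a2 a3 a4 a6 where E: "E = (a1,a2,a3,a4,a6)" by (cases E) auto
  obtain x1 x2 x3 x4 x6 where X: "change_vars 1 r s t E = (x1,x2,x3,x4,x6)"
    by (cases "change_vars 1 r s t E") auto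
  have "c4 (change_vars u r s t E) = c4 (x1,x2,x3,x4,x6) / u^4"
    using cv_split[of u r s t E] X c4_scale[OF u] by simp
  also have "c4 (x1,x2,x3,x4,x6) = c4 E" using X c4_cv1 E by metis
  finally show ?thesis .
qed



lemma int_at_of_int: "prime l \<Longrightarrow> int_at l (of_int m)"
proof -
  assume "prime l"
  hence "\<not> l dvd 1" using not_prime_unit by blast
  thus ?thesis unfolding int_at_def by (intro exI[of _ m] exI[of _ 1]) simp
qed

lemma int_at_add: assumes "prime l" "int_at l x" "int_at l y" shows "int_at l (x + y)"
proof -
  from assms(2,3) obtain m n m' n' where h: "n \<noteq> 0" "\<not> l dvd n" "x = of_int m / of_int n"
    "n' \<noteq> 0" "\<not> l dvd n'" "y = of_int m' / of_int n'" unfolding int_at_def by blast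
  have e: "x + y = of_int (m*n' + m'*n) / of_int (n*n')"
    using h(1,3,4,6) by (simp add: add_frac_eq)
  have "\<not> l dvd n*n'" using h(2,5) by (simp add: prime_dvd_mult_iff[OF assms(1)])
  moreover have "n*n' \<noteq> 0" using h(1,4) by simp
  ultimately show ?thesis unfolding int_at_def using e by blast
qed

lemma int_at_mult: assumes "prime l" "int_at l x" "int_at l y" shows "int_at l (x * y)"
proof -
  from assms(2,3) obtain m n m' n' where h: "n \<noteq> 0" "\<not> l dvd n" "x = of_int m / of_int n"
    "n' \<noteq> 0" "\<not> l dvd n'" "y = of_int m' / of_int n'" unfolding int_at_def by blast
  have e: "x * y = of_int (m*m') / of_int (n*n')"
    using h(1,3,4,6) by simp
  have "\<not> l dvd n*n'" using h(2,5) by (simp add: prime_dvd_mult_iff[OF assms(1)])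
  moreover have "n*n' \<noteq> 0" using h(1,4) by simp
  ultimately show ?thesis unfolding int_at_def using e by blast
qed

lemma int_at_neg: assumes "prime l" "int_at l x" shows "int_at l (- x)"
  using int_at_mult[OF assms(1) int_at_of_int[OF assms(1), of "-1"] assms(2)] by simp

lemma int_at_power: assumes "prime l" "int_at l x" shows "int_at l (x ^ k)"
proof (induction k)
  case 0
  show ?case using int_at_of_int[OF assms(1), of 1] by simp
next
  case (Suc k)
  thus ?case using int_at_mult[OF assms(1) assms(2) Suc] by simp
qed

lemma not_int_at: assumes "prime l" "n \<noteq> 0" "l dvd n" "\<not> l dvd m"
  shows "\<not> int_at l (of_int m / of_int n)"
proof
  assume "int_at l (of_int m / of_int n)"
  then obtain m' n' where "n' \<noteq> 0" "\<not> l dvd n'" "(of_int m / of_int n :: rat) = of_int m' / of_int n'"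
    unfolding int_at_def by blast
  hence "(of_int (m * n') :: rat) = of_int (m' * n)" using assms(2) by (simp add: divide_eq_eq eq_divide_eq)
  hence "m * n' = m' * n" by (simp only: of_int_eq_iff)
  hence "l dvd m * n'" using assms(3) by simp
  thus False using assms \<open>\<not> l dvd n'\<close> by (simp add: prime_dvd_mult_iff)
qed

lemma c4_int: assumes "prime l" "integral_model_at l E" shows "int_at l (c4 E)"
proof -
  obtain a1 a2 a3 a4 a6 where E: "E = (a1,a2,a3,a4,a6)" by (cases E) auto
  have i: "int_at l a1" "int_at l a2" "int_at l a3" "int_at l a4" using assms(2) E
    by (auto simp: integral_model_at_def)
  note R = int_at_add[OF assms(1)] int_at_mult[OF assms(1)] int_at_power[OF assms(1)]
    int_at_neg[OF assms(1)] int_at_of_int[OF assms(1)]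
  have "c4 E = (a1^2 + of_int 4*a2)^2 + (- (of_int 24*(of_int 2*a4 + a1*a3)))" using E by (simp add: c4_def)
  also have "int_at l \<dots>" by (intro R i)
  finally show ?thesis .
qed

lemma jaux: "(u::rat) \<noteq> 0 \<Longrightarrow> d \<noteq> 0 \<Longrightarrow> (x/u^4)^3 * (1/(d/u^12)) = x^3/d"
proof -
  assume "u \<noteq> 0" "d \<noteq> 0"
  have "(x/u^4)^3 = x^3/u^12" by (simp add: power_divide flip: power_mult)
  thus ?thesis using \<open>u \<noteq> 0\<close> \<open>d \<noteq> 0\<close> by simp
qed

lemma bad_red:
  assumes "prime l" "disc E \<noteq> 0" "c4 E ^ 3 / disc E = of_int m / of_int n"
    "n \<noteq> 0" "l dvd n" "\<not> l dvd m"
  shows "\<not> good_reduction E l"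
proof
  assume "good_reduction E l"
  then obtain u r s t where u: "u \<noteq> 0" and im: "integral_model_at l (change_vars u r s t E)"
    and un: "unit_at l (disc (change_vars u r s t E))" unfolding good_reduction_def by auto
  let ?E = "change_vars u r s t E"
  have "int_at l (c4 ?E ^ 3 * (1 / disc ?E))"
    using un unfolding unit_at_def
    by (intro int_at_mult[OF assms(1)] int_at_power[OF assms(1)] c4_int[OF assms(1) im]) auto
  also have "c4 ?E ^ 3 * (1 / disc ?E) = c4 E ^ 3 / disc E"
    by (simp only: c4_cv[OF u] disc_cv[OF u] jaux[OF u assms(2)])
  finally have "int_at l (c4 E ^ 3 / disc E)" .
  hence "int_at l (of_int m / of_int n)" by (simp only: assms(3))
  thus False using not_int_at[OF assms(1) assms(4-6)] by blast
qed



lemma frey_c4: "c4 (frey_curve (of_int A) (of_int B)) = of_int (16*(A^2+A*B+B^2))"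
  by (simp add: c4_def frey_curve_def) algebra

lemma frey_disc: "disc (frey_curve (of_int A) (of_int B)) = of_int (16*A^2*B^2*(A+B)^2)"
  by (simp add: disc_def frey_curve_def Let_def) algebra

lemma odd_prime_not_dvd_pow2: assumes "prime (l::int)" "l \<noteq> 2" shows "\<not> l dvd 2^k"
proof
  assume "l dvd 2^k"
  hence "l dvd 2" using assms(1) prime_dvd_power by blast
  hence "l \<le> 2" by (simp add: zdvd_imp_le)
  moreover have "l \<ge> 2" using assms(1) prime_ge_2_int by blast
  ultimately show False using assms(2) by simp
qed

lemma frey_bad:
  fixes A B :: int and l :: int
  assumes l: "prime l" "l \<noteq> 2" and nz: "A \<noteq> 0" "B \<noteq> 0" "A + B \<noteq> 0"
    and dv: "l dvd A * (A + B)" and nb: "\<not> l dvd B"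
  shows "\<not> good_reduction (frey_curve (of_int A) (of_int B)) l"
proof (rule bad_red[OF l(1)])
  show "disc (frey_curve (of_int A) (of_int B)) \<noteq> 0" using nz by (simp add: frey_disc)
  show "c4 (frey_curve (of_int A) (of_int B)) ^ 3 / disc (frey_curve (of_int A) (of_int B))
     = of_int ((16*(A^2+A*B+B^2))^3) / of_int (16*A^2*B^2*(A+B)^2)"
    by (simp only: frey_c4 frey_disc of_int_power)
  show "16*A^2*B^2*(A+B)^2 \<noteq> 0" using nz by simp
  show "l dvd 16*A^2*B^2*(A+B)^2"
  proof -
    have "16*A^2*B^2*(A+B)^2 = (A*(A+B)) * (16*A*B^2*(A+B))" by (simp add: power2_eq_square)
    show ?thesis unfolding \<open>16*A^2*B^2*(A+B)^2 = (A*(A+B)) * (16*A*B^2*(A+B))\<close>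
      using dv by (rule dvd_mult2)
  qed
  show "\<not> l dvd (16*(A^2+A*B+B^2))^3"
  proof
    assume "l dvd (16*(A^2+A*B+B^2))^3"
    hence "l dvd 16*(A^2+A*B+B^2)" using l(1) prime_dvd_power by blast
    moreover have "\<not> l dvd 16" using odd_prime_not_dvd_pow2[OF l, of 4] by simp
    ultimately have "l dvd A^2+A*B+B^2" using l(1) prime_dvd_mult_iff by blast
    moreover have "A^2+A*B+B^2 = A*(A+B) + B*B" by (simp add: power2_eq_square algebra_simps)
    ultimately have "l dvd B*B" using dv by (metis dvd_add_right_iff)
    thus False using nb l(1) prime_dvd_mult_iff by blast
  qed
qed

lemma dvd_pow_pos: "(l::int) dvd x \<Longrightarrow> 0 < p \<Longrightarrow> l dvd x ^ p"
  by (metis dvd_power dvd_trans)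

lemma int_at_num: "prime l \<Longrightarrow> int_at l (numeral k)"
  using int_at_of_int[of l "numeral k"] by simp

lemma int_at_zero: "prime l \<Longrightarrow> int_at l 0"
  using int_at_of_int[of l 0] by simp

theorem mainTheorem3:
  fixes p :: nat and \<alpha> :: nat and a b c :: int
  assumes "prime p" and "odd p"
    and "1 \<le> \<alpha>" and "\<alpha> < p"
    and "a \<noteq> 0" and "b \<noteq> 0" and "c \<noteq> 0"
    and "gcd a (gcd b c) = 1"
    and "a ^ p + 2 ^ \<alpha> * b ^ p + c ^ p = 0"
    and "a mod 4 = 3"
  shows "conductor_is_power_of_2
           (frey_curve (of_int (a ^ p)) (of_int (2 ^ \<alpha> * b ^ p)))
         \<longleftrightarrow> (a, b, c) = (-1, 1, -1)"
proof
  assume H: "conductor_is_power_of_2 (frey_curve (of_int (a ^ p)) (of_int (2 ^ \<alpha> * b ^ p)))"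
  show "(a, b, c) = (-1, 1, -1)"
  proof (rule ccontr)
    assume ne: "(a, b, c) \<noteq> (-1, 1, -1)"
    have oa: "odd a" using assms(10) by presburger
    have oc: "odd c"
    proof
      assume "even c"
      hence "even (c^p)" using assms(1) prime_gt_0_nat by auto
      moreover have "even (2 ^ \<alpha> * b ^ p)" using assms(3) by simp
      ultimately have "even (a^p)" using assms(9) by (metis add.commute add_eq_0_iff even_add even_minus)
      thus False using oa by simp
    qed
    have "\<exists>l. prime l \<and> l dvd a * c"
    proof (rule ccontr)
      assume nl: "\<not> (\<exists>l. prime l \<and> l dvd a * c)"
      have "is_unit (a*c)"
        using prime_divisor_exists[of "a*c"] nl assms(5,7) by auto
      hence "is_unit a" "is_unit c" by (simp_all only: is_unit_mult_iff)
      hence ua: "\<bar>a\<bar> = 1" and uc: "\<bar>c\<bar> = 1" by simp_all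
      have a1: "a = -1" using ua assms(10) by (cases "a \<ge> 0") auto
      have op: "odd p" by fact
      have ap: "a^p = -1" using a1 op by simp
      show False
      proof (cases "c = 1")
        case True
        hence "2 ^ \<alpha> * b ^ p = 0" using assms(9) ap by simp
        thus False using assms(6) by simp
      next
        case False
        hence c1: "c = -1" using uc by auto
        hence "c^p = -1" using op by simp
        hence e: "2 ^ \<alpha> * b ^ p = 2" using assms(9) ap by simp
        obtain k where k: "\<alpha> = Suc k" using assms(3) by (cases \<alpha>) auto
        hence e2: "2 ^ k * b ^ p = 1" using e by simp
        hence "is_unit (b ^ p)" by (metis dvd_triv_right)
        hence "is_unit b \<or> p = 0" by (simp only: is_unit_power_iff)
        hence "is_unit b" using assms(1) by auto
        hence "b = 1 \<or> b = -1" by auto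
        moreover have "b \<noteq> -1"
        proof
          assume "b = -1"
          hence "2 ^ k * b ^ p = - (2^k)" using op by simp
          thus False using e2 by (smt (verit) zero_less_power)
        qed
        ultimately have "b = 1" by blast
        thus False using ne a1 c1 by simp
      qed
    qed
    then obtain l where l: "prime l" "l dvd a * c" by blast
    have l2: "l \<noteq> 2"
    proof
      assume "l = 2"
      hence "even (a*c)" using l by simp
      thus False using oa oc by simp
    qed
    have p0: "p > 0" using assms(1) prime_gt_0_nat by blast
    define A where "A = a^p"
    define B where "B = 2 ^ \<alpha> * b ^ p"
    have AB: "A + B = - (c^p)" using assms(9) unfolding A_def B_def by simp
    have nb: "\<not> l dvd B"
    proof
      assume "l dvd B"
      hence "l dvd b ^ p" unfolding B_def using l(1) l2 odd_prime_not_dvd_pow2 prime_dvd_mult_iff by blast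
      hence lb: "l dvd b" using l(1) prime_dvd_power by blast
      have "l dvd a \<and> l dvd c"
      proof (cases "l dvd a")
        case True
        hence "l dvd A" unfolding A_def using p0 by (rule dvd_pow_pos)
        hence "l dvd A + B" using \<open>l dvd B\<close> by simp
        hence "l dvd c^p" using AB by simp
        thus ?thesis using True l(1) prime_dvd_power by blast
      next
        case False
        hence "l dvd c" using l prime_dvd_mult_iff by blast
        hence "l dvd c^p" using p0 by (rule dvd_pow_pos)
        hence "l dvd A + B" using AB by simp
        hence "l dvd A" using \<open>l dvd B\<close> by (simp add: dvd_add_left_iff)
        hence "l dvd a" unfolding A_def using l(1) prime_dvd_power by blast
        thus ?thesis using False by blast
      qed
      hence "l dvd gcd a (gcd b c)" using lb by simp
      thus False using assms(8) l(1) not_prime_unit by auto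
    qed
    have dv: "l dvd A * (A + B)"
    proof -
      have "l dvd a \<or> l dvd c" using l prime_dvd_mult_iff by blast
      thus ?thesis
      proof
        assume "l dvd a" hence "l dvd A" unfolding A_def using p0 by (rule dvd_pow_pos)
        thus ?thesis by simp
      next
        assume "l dvd c" hence "l dvd c^p" using p0 by (rule dvd_pow_pos)
        hence "l dvd A + B" using AB by simp
        thus ?thesis by simp
      qed
    qed
    have nz: "A \<noteq> 0" "B \<noteq> 0" "A + B \<noteq> 0" using assms(5,6,7) AB unfolding A_def B_def by auto
    have "\<not> good_reduction (frey_curve (of_int A) (of_int B)) l"
      by (rule frey_bad[OF l(1) l2 nz dv nb])
    hence "l \<in> conductor_primes (frey_curve (of_int A) (of_int B))"
      using l(1) prime_gt_0_int unfolding conductor_primes_def by blast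
    thus False using H l2 unfolding conductor_is_power_of_2_def A_def B_def by blast
  qed
next
  assume "(a, b, c) = (-1, 1, -1)"
  hence abc: "a = -1" "b = 1" "c = -1" by auto
  have ap: "a^p = -1" "c^p = -1" using abc assms(2) by simp_all
  hence "(2::int) ^ \<alpha> = 2 ^ 1" using assms(9) abc by simp
  hence al: "\<alpha> = 1" by (subst (asm) power_inject_exp) simp_all
  have E: "frey_curve (of_int (a ^ p)) (of_int (2 ^ \<alpha> * b ^ p)) = (0, 3, 0, 2, 0)"
    using ap abc al by (simp add: frey_curve_def)
  show "conductor_is_power_of_2 (frey_curve (of_int (a ^ p)) (of_int (2 ^ \<alpha> * b ^ p)))"
    unfolding conductor_is_power_of_2_def conductor_primes_def E
  proof (rule subsetI, rule ccontr)
    fix l assume "l \<in> {l. prime l \<and> l > 0 \<and> \<not> good_reduction (0, 3, 0, 2, 0) l}" "l \<notin> {2}"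
    hence l: "prime l" "l \<noteq> 2" and ng: "\<not> good_reduction (0, 3, 0, 2, 0) l" by auto
    have cv: "change_vars 1 0 0 0 (0, 3, 0, 2, 0) = (0, 3, 0, 2, 0)" by (simp add: change_vars_def)
    have d: "disc (0, 3, 0, 2, 0) = 64" by (simp add: disc_def Let_def)
    have "\<not> l dvd 64" using odd_prime_not_dvd_pow2[OF l, of 6] by simp
    hence "int_at l (1/64)" unfolding int_at_def by (intro exI[of _ 1] exI[of _ 64]) simp
    hence "unit_at l 64" using int_at_num[OF l(1)] by (simp add: unit_at_def)
    moreover have "integral_model_at l (0, 3, 0, 2, 0)"
      using int_at_num[OF l(1)] int_at_zero[OF l(1)] by (simp add: integral_model_at_def)
    ultimately have "good_reduction (0, 3, 0, 2, 0) l" unfolding good_reduction_def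
      by (intro exI[of _ 1] exI[of _ 0]) (simp add: cv d)
    thus False using ng by blast
  qed
qed

end
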